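(* Let $P$ be any product rule. Let $(f_a)_{a\in\Sigma}$ be a tuple of $P$-finite series and let $g$ be a series with $\delta_ag=f_a$ for all $a\in\Sigma$. Then $g$ is $P$-finite.
   Context: Let $\Sigma$ be a finite alphabet, $\Sigma^*$ the finite words with empty word $\varepsilon$. A series is $f:\Sigma^*\to\mathbb Q$, $f_w=f(w)$; series form a $\mathbb Q$-vector space under pointwise operations with zero $\mathbb 0$. For $a\in\Sigma$, $\delta_af$ is $w\mapsto f(aw)$. Terms over $X$: generated by $u,v::=x\mid 0\mid c\cdot u\mid u+v\mid u*v$. A product rule is a term $P$ over $\{x,\dot x,y,\dot y\}$. The $P$-product $*$ and semantics $[\![u]\!]_\varrho$ are the unique pair with $(f*g)_\varepsilon=f_\varepsilon g_\varepsilon$, $\delta_a(f*g)=[\![P]\!]_{[x\mapsto f,\dot x\mapsto\delta_af,y\mapsto g,\dot y\mapsto\delta_ag]}$, and $[\![\cdot]\!]_\varrho$ interpreting variables via $\varrho$, constructors by zero, scalar multiplication, addition, $*$. $P$-finite: $A(g_1,\dots,g_k)$ is the smallest set of series containing $\mathbb 0,g_1,\dots,g_k$ closed under scalar multiplication, $+$, $*$; $f$ is $P$-finite if there are $g_1=f,\dots,g_k$ with $\delta_ag_i\in A(g_1,\dots,g_k)$ for all $i$ and $a\in\Sigma$. *)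

theory Defs
  imports Main "HOL.Rat"
begin

type_synonym 'a series = "'a list \<Rightarrow> rat"

definition delta :: "'a \<Rightarrow> 'a series \<Rightarrow> 'a series" where
  "delta a f = (\<lambda>w. f (a # w))"

datatype 'v trm = Var 'v | Zero | Scal rat "'v trm" | Plus "'v trm" "'v trm" | Times "'v trm" "'v trm"

text \<open>Variables of a product rule: x, x-dot, y, y-dot.\<close>
datatype pvar = VX | VXd | VY | VYd

fun sem :: "('a series \<Rightarrow> 'a series \<Rightarrow> 'a series) \<Rightarrow> ('v \<Rightarrow> 'a series) \<Rightarrow> 'v trm \<Rightarrow> 'a series" where
  "sem mul \<rho> (Var x) = \<rho> x"
| "sem mul \<rho> Zero = (\<lambda>w. 0)"
| "sem mul \<rho> (Scal c u) = (\<lambda>w. c * sem mul \<rho> u w)"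
| "sem mul \<rho> (Plus u v) = (\<lambda>w. sem mul \<rho> u w + sem mul \<rho> v w)"
| "sem mul \<rho> (Times u v) = mul (sem mul \<rho> u) (sem mul \<rho> v)"

definition prule_env :: "'a \<Rightarrow> 'a series \<Rightarrow> 'a series \<Rightarrow> pvar \<Rightarrow> 'a series" where
  "prule_env a f g = (\<lambda>v. case v of VX \<Rightarrow> f | VXd \<Rightarrow> delta a f | VY \<Rightarrow> g | VYd \<Rightarrow> delta a g)"

definition is_P_product :: "pvar trm \<Rightarrow> ('a series \<Rightarrow> 'a series \<Rightarrow> 'a series) \<Rightarrow> bool" where
  "is_P_product P mul \<longleftrightarrow>
     (\<forall>f g. mul f g [] = f [] * g [] \<and>
            (\<forall>a. delta a (mul f g) = sem mul (prule_env a f g) P))"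

text \<open>The P-product (unique operation satisfying the equations).\<close>
definition pprod :: "pvar trm \<Rightarrow> 'a series \<Rightarrow> 'a series \<Rightarrow> 'a series" where
  "pprod P = (THE mul. is_P_product P mul)"

inductive_set alg :: "pvar trm \<Rightarrow> 'a series set \<Rightarrow> 'a series set" for P G where
  zero: "(\<lambda>w. 0) \<in> alg P G"
| gen: "g \<in> G \<Longrightarrow> g \<in> alg P G"
| scal: "f \<in> alg P G \<Longrightarrow> (\<lambda>w. c * f w) \<in> alg P G"
| add: "f \<in> alg P G \<Longrightarrow> h \<in> alg P G \<Longrightarrow> (\<lambda>w. f w + h w) \<in> alg P G"
| mult: "f \<in> alg P G \<Longrightarrow> h \<in> alg P G \<Longrightarrow> pprod P f h \<in> alg P G"

definition P_finite :: "pvar trm \<Rightarrow> ('a::finite) series \<Rightarrow> bool" where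
  "P_finite P f \<longleftrightarrow>
     (\<exists>gs. gs \<noteq> [] \<and> hd gs = f \<and>
          (\<forall>g\<in>set gs. \<forall>a. delta a g \<in> alg P (set gs)))"

end

theory Submission
  imports Defs
begin

lemma alg_mono: "f \<in> alg P G \<Longrightarrow> G \<subseteq> H \<Longrightarrow> f \<in> alg P H"
  by (induction rule: alg.induct) (auto intro: alg.intros)

theorem mainTheorem19:
  fixes P :: "pvar trm"
    and f :: "'a::finite \<Rightarrow> 'a series"
    and g :: "'a series"
  assumes "\<forall>a. P_finite P (f a)"
    and "\<forall>a. delta a g = f a"
  shows "P_finite P g"
proof -
  from assms(1) obtain gsf where gsf: "\<And>a. gsf a \<noteq> [] \<and> hd (gsf a) = f a \<and>
          (\<forall>h\<in>set (gsf a). \<forall>b. delta b h \<in> alg P (set (gsf a)))"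
    unfolding P_finite_def by metis
  obtain xs :: "'a list" where xs: "set xs = UNIV" using finite_list finite_UNIV by blast
  define gs where "gs = g # concat (map gsf xs)"
  have sub: "set (gsf a) \<subseteq> set gs" for a using xs by (auto simp: gs_def)
  have "\<forall>h\<in>set gs. \<forall>b. delta b h \<in> alg P (set gs)"
  proof (intro ballI allI)
    fix h b assume "h \<in> set gs"
    then consider "h = g" | a where "h \<in> set (gsf a)" using xs by (auto simp: gs_def)
    then show "delta b h \<in> alg P (set gs)"
    proof cases
      case 1
      have "f b \<in> set (gsf b)" using gsf[of b] by (metis hd_in_set)
      then show ?thesis using 1 assms(2) sub[of b] by (auto intro: alg.gen)
    next
      case 2
      then show ?thesis using gsf[of a] sub[of a] alg_mono by blast
    qed
  qed
  then show ?thesis unfolding P_finite_def by (intro exI[of _ gs]) (simp add: gs_def)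
qed

end
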